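(* Let $\Sigma$ be a finite set with $|\Sigma|=k\geq 3$, let $n\geq 1$, let $a,b\in\Sigma$, and let $B=\Sigma\setminus\{a,b\}$. Then every partial $n$-ary quasigroup $g:\Sigma^{n-1}\times B\to\Sigma$ has at most $2^{(k/2)^{n-1}}$ distinct extensions to an $n$-ary quasigroup $f:\Sigma^n\to\Sigma$.
   Context: An $n$-ary quasigroup of order $k=|\Sigma|$ is a function $f:\Sigma^n\to\Sigma$ such that fixing any $n-1$ of its arguments to arbitrary values of $\Sigma$ yields a bijection $\Sigma\to\Sigma$ in the remaining argument. A partial $n$-ary quasigroup is a function $g:\Omega\to\Sigma$ with $\Omega\subset\Sigma^n$ such that $g(\bar x)\neq g(\bar y)$ for any two tuples $\bar x,\bar y\in\Omega$ differing in exactly one position. An $n$-ary quasigroup $f$ is an extension of a partial $n$-ary quasigroup $g:\Omega\to\Sigma$ if $f|_{\Omega}=g$. Here $\Sigma^{n-1}\times B$ denotes the set of tuples in $\Sigma^n$ whose last coordinate lies in $B$. *)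

theory Defs
  imports Complex_Main "HOL-Library.FuncSet"
begin

text \<open>Tuples in Sigma^n: functions on the index set {0..<n} (extensional) with values in S.
  Coordinate n-1 is the last coordinate.\<close>
definition tuples :: "'a set \<Rightarrow> nat \<Rightarrow> (nat \<Rightarrow> 'a) set" where
  "tuples S n = PiE {..<n} (\<lambda>_. S)"

definition nary_quasigroup :: "'a set \<Rightarrow> nat \<Rightarrow> ((nat \<Rightarrow> 'a) \<Rightarrow> 'a) \<Rightarrow> bool" where
  "nary_quasigroup S n f \<longleftrightarrow>
     (\<forall>x\<in>tuples S n. f x \<in> S) \<and>
     (\<forall>i<n. \<forall>x\<in>tuples S n. bij_betw (\<lambda>c. f (x(i := c))) S S)"

definition partial_nary_quasigroup ::
  "'a set \<Rightarrow> nat \<Rightarrow> (nat \<Rightarrow> 'a) set \<Rightarrow> ((nat \<Rightarrow> 'a) \<Rightarrow> 'a) \<Rightarrow> bool" where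
  "partial_nary_quasigroup S n \<Omega> g \<longleftrightarrow>
     \<Omega> \<subseteq> tuples S n \<and> (\<forall>x\<in>\<Omega>. g x \<in> S) \<and>
     (\<forall>x\<in>\<Omega>. \<forall>y\<in>\<Omega>. card {i\<in>{..<n}. x i \<noteq> y i} = 1 \<longrightarrow> g x \<noteq> g y)"

definition extensions ::
  "'a set \<Rightarrow> nat \<Rightarrow> (nat \<Rightarrow> 'a) set \<Rightarrow> ((nat \<Rightarrow> 'a) \<Rightarrow> 'a) \<Rightarrow> ((nat \<Rightarrow> 'a) \<Rightarrow> 'a) set" where
  "extensions S n \<Omega> g =
     {f \<in> extensional (tuples S n). nary_quasigroup S n f \<and> (\<forall>x\<in>\<Omega>. f x = g x)}"

end

theory Submission
  imports Defs
begin

lemma bij_agree: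
  assumes "bij_betw h S S" "bij_betw h' S S" "\<forall>c\<in>S-{a,b}. h c = h' c" "a\<in>S" "b\<in>S"
  shows "h a \<in> {h' a, h' b}"
proof (rule ccontr)
  assume nin: "h a \<notin> {h' a, h' b}"
  have "h a \<in> S" using assms(1,4) bij_betwE by blast
  then have "h a \<in> h' ` S" using assms(2) by (simp add: bij_betw_def)
  then obtain c where c: "c \<in> S" "h a = h' c" by blast
  with nin have "c \<notin> {a,b}" by auto
  with c assms(3) have "h a = h c" by auto
  with assms(1) c(1) assms(4) have "a = c" by (auto simp: bij_betw_def inj_on_def)
  with \<open>c \<notin> {a,b}\<close> show False by auto
qed

lemma cube_bound:
  fixes D :: "nat set"
  assumes "finite D"
  shows "\<And>T :: (nat \<Rightarrow> 'a) set. T \<noteq> {} \<Longrightarrow> finite T \<Longrightarrow>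
    (\<forall>x\<in>T. \<forall>i\<in>D. \<exists>y\<in>T. y i \<noteq> x i \<and> (\<forall>j. j \<noteq> i \<longrightarrow> y j = x j)) \<Longrightarrow> 2 ^ card D \<le> card T"
  using assms
proof (induction D rule: finite_induct)
  case empty
  then show ?case by (simp add: Suc_leI card_gt_0_iff)
next
  case (insert i D T)
  obtain x where x: "x \<in> T" using insert.prems(1) by blast
  obtain y where y: "y \<in> T" "y i \<noteq> x i" using insert.prems(3) x by blast
  define T1 where "T1 = {z\<in>T. z i = x i}"
  define T2 where "T2 = {z\<in>T. z i = y i}"
  have P: "\<forall>x\<in>Tj. \<forall>j\<in>D. \<exists>y\<in>Tj. y j \<noteq> x j \<and> (\<forall>l. l \<noteq> j \<longrightarrow> y l = x l)"
    if "Tj = {z\<in>T. z i = v}" for Tj v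
  proof (intro ballI)
    fix z j assume z: "z \<in> Tj" and j: "j \<in> D"
    then have "j \<noteq> i" using insert.hyps(2) by auto
    have zT: "z \<in> T" using z that by auto
    from insert.prems(3) zT j obtain w where w: "w \<in> T" "w j \<noteq> z j" "\<forall>l. l \<noteq> j \<longrightarrow> w l = z l"
      by blast
    then have "w i = z i" using \<open>j \<noteq> i\<close> by metis
    with w z that show "\<exists>y\<in>Tj. y j \<noteq> z j \<and> (\<forall>l. l \<noteq> j \<longrightarrow> y l = z l)" by auto
  qed
  have c1: "2 ^ card D \<le> card T1"
    using insert.IH[of T1] P[OF T1_def] x insert.prems(2) unfolding T1_def by auto
  have c2: "2 ^ card D \<le> card T2"
    using insert.IH[of T2] P[OF T2_def] y insert.prems(2) unfolding T2_def by auto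
  have "card T1 + card T2 = card (T1 \<union> T2)"
    using insert.prems(2) y(2) by (intro card_Un_disjoint[symmetric]) (auto simp: T1_def T2_def)
  also have "\<dots> \<le> card T" using insert.prems(2) by (intro card_mono) (auto simp: T1_def T2_def)
  finally show ?case using c1 c2 insert.hyps by simp
qed

lemma tup_ext:
  assumes "x \<in> tuples S (n-1)" "c \<in> S" "n \<ge> 1"
  shows "x(n-1 := c) \<in> tuples S n"
proof -
  have e: "{..<n} = insert (n-1) {..<n-1}" using assms(3) by auto
  show ?thesis using assms(1,2) unfolding tuples_def e
    by (auto simp: PiE_def extensional_def Pi_def)
qed

lemma tup_res:
  assumes "x \<in> tuples S n" "n \<ge> 1"
  shows "x(n-1 := undefined) \<in> tuples S (n-1)" "(x(n-1 := undefined))(n-1 := x (n-1)) = x"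
    "x (n-1) \<in> S"
  using assms unfolding tuples_def by (auto simp: PiE_def extensional_def Pi_def)

lemma tup_upd:
  assumes "x \<in> tuples S m" "i < m" "c \<in> S"
  shows "x(i := c) \<in> tuples S m" "x i \<in> S"
  using assms unfolding tuples_def by (auto simp: PiE_def extensional_def Pi_def)


theorem lemma1:
  fixes S :: "'a set" and n k :: nat and a b :: 'a and g :: "(nat \<Rightarrow> 'a) \<Rightarrow> 'a"
  assumes "finite S" and "card S = k" and "k \<ge> 3" and "n \<ge> 1"
    and "a \<in> S" and "b \<in> S"
    and "partial_nary_quasigroup S n {x \<in> tuples S n. x (n - 1) \<in> S - {a, b}} g"
  shows "real (card (extensions S n {x \<in> tuples S n. x (n - 1) \<in> S - {a, b}} g))
           \<le> 2 powr ((real k / 2) ^ (n - 1))"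
proof -
  note n1 = assms(4) and aS = assms(5) and bS = assms(6)
  define Om where "Om = {x \<in> tuples S n. x (n - 1) \<in> S - {a, b}}"
  define E where "E = extensions S n Om g"
  define T' where "T' = tuples S (n-1)"
  have Eq: "nary_quasigroup S n f" "\<And>x. x \<in> Om \<Longrightarrow> f x = g x" "f \<in> extensional (tuples S n)"
    if "f \<in> E" for f using that by (auto simp: E_def extensions_def)
  have inS: "f x \<in> S" if "f \<in> E" "x \<in> tuples S n" for f x
    using Eq(1)[OF that(1)] that(2) by (auto simp: nary_quasigroup_def)
  have bijlast: "bij_betw (\<lambda>c. f (x(n-1 := c))) S S" if "f \<in> E" "x \<in> T'" for f x
  proof -
    have "x(n-1 := a) \<in> tuples S n" using tup_ext that(2) aS n1 by (auto simp: T'_def)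
    moreover have "n - 1 < n" using n1 by auto
    ultimately have "bij_betw (\<lambda>c. f ((x(n-1 := a))(n-1 := c))) S S"
      using Eq(1)[OF that(1)] unfolding nary_quasigroup_def by blast
    then show ?thesis by simp
  qed
  have line: "bij_betw (\<lambda>c. f ((x(i := c))(n-1 := d))) S S"
    if "f \<in> E" "x \<in> T'" "i < n-1" "d \<in> S" for f x i d
  proof -
    have "x(n-1 := d) \<in> tuples S n" using tup_ext that(2,4) n1 by (auto simp: T'_def)
    moreover have "i < n" using that(3) by auto
    ultimately have "bij_betw (\<lambda>c. f ((x(n-1 := d))(i := c))) S S"
      using Eq(1)[OF that(1)] unfolding nary_quasigroup_def by blast
    moreover have "\<And>c. (x(n-1 := d))(i := c) = (x(i := c))(n-1 := d)"
      using that(3) by (auto simp: fun_upd_twist)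
    ultimately show ?thesis by simp
  qed
  have agreeB: "\<forall>c\<in>S-{a,b}. f (x(n-1 := c)) = f' (x(n-1 := c))"
    if "f \<in> E" "f' \<in> E" "x \<in> T'" for f f' x
  proof
    fix c assume c: "c \<in> S - {a,b}"
    then have "x(n-1 := c) \<in> Om" using tup_ext that(3) n1 by (auto simp: T'_def Om_def)
    then show "f (x(n-1 := c)) = f' (x(n-1 := c))" using Eq(2)[OF that(1)] Eq(2)[OF that(2)] by simp
  qed
  have PPa: "f (x(n-1 := a)) \<in> {f' (x(n-1 := a)), f' (x(n-1 := b))}"
    if "f \<in> E" "f' \<in> E" "x \<in> T'" for f f' x
    using bij_agree[OF bijlast[OF that(1,3)] bijlast[OF that(2,3)] agreeB[OF that] aS bS] by simp
  have PPb: "f (x(n-1 := b)) \<in> {f' (x(n-1 := a)), f' (x(n-1 := b))}"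
    if "f \<in> E" "f' \<in> E" "x \<in> T'" for f f' x
    using bij_agree[OF bijlast[OF that(1,3)] bijlast[OF that(2,3)], of b a] agreeB[OF that] aS bS
    by (simp add: insert_commute)
  have neqab: "f (x(n-1 := a)) \<noteq> f (x(n-1 := b))" if "f \<in> E" "x \<in> T'" "a \<noteq> b" for f x
    using bijlast[OF that(1,2)] that(3) aS bS by (auto simp: bij_betw_def inj_on_def)
  have determined: "f = f'" if "f \<in> E" "f' \<in> E" "\<forall>x\<in>T'. f (x(n-1 := a)) = f' (x(n-1 := a))" for f f'
  proof (rule extensionalityI[OF Eq(3)[OF that(1)] Eq(3)[OF that(2)]])
    fix x assume x: "x \<in> tuples S n"
    define x' where "x' = x(n-1 := undefined)"
    have x': "x' \<in> T'" "x'(n-1 := x (n-1)) = x" "x (n-1) \<in> S"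
      using tup_res[OF x n1] by (auto simp: x'_def T'_def)
    have ha: "f (x'(n-1 := a)) = f' (x'(n-1 := a))" using that(3) x' by auto
    have hb: "f (x'(n-1 := b)) = f' (x'(n-1 := b))"
    proof (cases "a = b")
      case True then show ?thesis using ha by simp
    next
      case False
      have "f (x'(n-1 := b)) \<noteq> f' (x'(n-1 := a))" using ha neqab[OF that(1) x'(1) False] by simp
      then show ?thesis using PPb[OF that(1,2) x'(1)] by auto
    qed
    consider "x (n-1) = a" | "x (n-1) = b" | "x (n-1) \<in> S - {a,b}" using x'(3) by auto
    then show "f x = f' x"
    proof cases
      case 1 then show ?thesis using ha x'(2) by metis
    next
      case 2 then show ?thesis using hb x'(2) by metis
    next
      case 3 then show ?thesis using agreeB[OF that(1,2) x'(1)] x'(2) by metis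
    qed
  qed
  have pos: "0 \<le> (real k / 2) ^ (n - 1)" by simp
  show ?thesis
  proof (cases "E = {}")
    case True
    then show ?thesis unfolding E_def Om_def by simp
  next
    case False
    then obtain f0 where f0: "f0 \<in> E" by blast
    show ?thesis
    proof (cases "a = b")
      case True
      have "card E \<le> 1"
      proof (cases "finite E")
        case True
        have "\<forall>f\<in>E. \<forall>f'\<in>E. f = f'"
          using determined PPa \<open>a = b\<close> by (metis insert_absorb2 singletonD)
        then show ?thesis using card_le_Suc0_iff_eq[OF True] by simp
      qed simp
      then have "real (card E) \<le> 1" by simp
      also have "1 \<le> (2::real) powr ((real k / 2) ^ (n - 1))"
        using pos by (intro ge_one_powr_ge_zero) auto
      finally show ?thesis unfolding E_def Om_def .
    next
      case ab: False
      define A where "A x = f0 (x(n-1 := a))" for x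
      define Bv where "Bv x = f0 (x(n-1 := b))" for x
      define P0 where "P0 x = {A x, Bv x}" for x
      define Adj where "Adj = {(x,y). x \<in> T' \<and> y \<in> T' \<and> (\<exists>i<n-1. \<exists>c\<in>S. y = x(i := c)) \<and> P0 x \<inter> P0 y \<noteq> {}}"
      define R where "R = Adj\<^sup>*"
      define Cl where "Cl x = {y. (x,y) \<in> R}" for x
      have finT': "finite T'" unfolding T'_def tuples_def using assms(1) by (simp add: finite_PiE)
      have cardT': "card T' = k ^ (n-1)" unfolding T'_def tuples_def using assms(1,2)
        by (simp add: card_PiE)
      have adj_sym: "(y,x) \<in> Adj" if "(x,y) \<in> Adj" for x y
      proof -
        from that obtain i c where ic: "i < n-1" "c \<in> S" "y = x(i := c)" "x \<in> T'" "y \<in> T'"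
          "P0 x \<inter> P0 y \<noteq> {}" unfolding Adj_def by blast
        have "x = y(i := x i)" using ic by auto
        moreover have "x i \<in> S" using tup_upd(2)[of x S "n-1" i c] ic by (auto simp: T'_def)
        ultimately show ?thesis using ic unfolding Adj_def by blast
      qed
      have R_sym: "(y,x) \<in> R" if "(x,y) \<in> R" for x y
        using that unfolding R_def
      proof (induction rule: rtrancl_induct)
        case base then show ?case by simp
      next
        case (step y z)
        then show ?case using adj_sym by (meson converse_rtrancl_into_rtrancl)
      qed
      have R_T: "y \<in> T'" if "(x,y) \<in> R" "x \<in> T'" for x y
        using that unfolding R_def by (induction rule: rtrancl_induct) (auto simp: Adj_def)
      have prop1: "f (y(n-1 := a)) = A y" if "f \<in> E" "(x,y) \<in> Adj" "f (x(n-1 := a)) = A x" for f x y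
      proof -
        from that(2) obtain i c where ic: "i < n-1" "c \<in> S" "y = x(i := c)" "x \<in> T'" "y \<in> T'"
          "P0 x \<inter> P0 y \<noteq> {}" unfolding Adj_def by blast
        show ?thesis
        proof (cases "c = x i")
          case True
          then have "y = x" using ic by auto
          then show ?thesis using that(3) by simp
        next
          case cne: False
          have xiS: "x i \<in> S" using tup_upd(2)[of x S "n-1" i c] ic by (auto simp: T'_def)
          have lneq: "h ((x(i := c))(n-1 := d)) \<noteq> h (x(n-1 := d))" if "h \<in> E" "d \<in> S" for h d
          proof -
            have "inj_on (\<lambda>e. h ((x(i := e))(n-1 := d))) S" using line[OF that(1) ic(4) ic(1) that(2)]
              by (simp add: bij_betw_def)
            then have "h ((x(i := c))(n-1 := d)) \<noteq> h ((x(i := x i))(n-1 := d))"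
              using cne ic(2) xiS by (auto simp: inj_on_def)
            then show ?thesis by simp
          qed
          have l1: "f (y(n-1 := a)) \<noteq> f (x(n-1 := a))" using lneq[OF that(1) aS] ic by simp
          have l2: "A y \<noteq> A x" using lneq[OF f0 aS] ic by (simp add: A_def)
          have l3: "f (y(n-1 := b)) \<noteq> f (x(n-1 := b))" using lneq[OF that(1) bS] ic by simp
          have l4: "Bv y \<noteq> Bv x" using lneq[OF f0 bS] ic by (simp add: Bv_def)
          have fxb: "f (x(n-1 := b)) = Bv x"
            using PPb[OF that(1) f0 ic(4)] neqab[OF that(1) ic(4) ab] that(3)
            by (auto simp: A_def Bv_def)
          have fya: "f (y(n-1 := a)) \<in> P0 y" using PPa[OF that(1) f0 ic(5)] by (simp add: P0_def A_def Bv_def)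
          have fyb: "f (y(n-1 := b)) \<in> P0 y" using PPb[OF that(1) f0 ic(5)] by (simp add: P0_def A_def Bv_def)
          have fyab: "f (y(n-1 := a)) \<noteq> f (y(n-1 := b))" using neqab[OF that(1) ic(5) ab] .
          show ?thesis using ic(6) l1 l2 l3 l4 fxb fya fyb fyab that(3) unfolding P0_def by auto
        qed
      qed
      have propR: "f (y(n-1 := a)) = A y" if "f \<in> E" "(x,y) \<in> R" "f (x(n-1 := a)) = A x" for f x y
        using that(2,3) unfolding R_def
        by (induction rule: rtrancl_induct) (use prop1[OF that(1)] in auto)
      have neighbor: "\<exists>y\<in>Cl x. y i \<noteq> z i \<and> (\<forall>j. j \<noteq> i \<longrightarrow> y j = z j)"
        if "x \<in> T'" "z \<in> Cl x" "i < n-1" for x z i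
      proof -
        have zT: "z \<in> T'" using R_T that by (auto simp: Cl_def)
        have "A z \<in> S" unfolding A_def using inS[OF f0 tup_ext[OF zT[unfolded T'_def] aS n1]] .
        then have "A z \<in> (\<lambda>e. f0 ((z(i := e))(n-1 := b))) ` S"
          using line[OF f0 zT that(3) bS] by (simp add: bij_betw_def)
        then obtain e where e: "e \<in> S" "f0 ((z(i := e))(n-1 := b)) = A z" by (metis (no_types, lifting) imageE)
        define y where "y = z(i := e)"
        have "e \<noteq> z i"
        proof
          assume "e = z i"
          then have "Bv z = A z" using e by (simp add: Bv_def)
          then show False using neqab[OF f0 zT ab] by (simp add: A_def Bv_def)
        qed
        have yT: "y \<in> T'" using tup_upd(1)[of z S "n-1" i e] zT that(3) e(1) by (simp add: T'_def y_def)
        have "A z \<in> P0 z \<inter> P0 y" using e by (simp add: P0_def Bv_def y_def)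
        then have "(z,y) \<in> Adj" unfolding Adj_def using zT yT that(3) e(1) y_def by blast
        then have "y \<in> Cl x" using that(2) unfolding Cl_def R_def by auto
        moreover have "y i \<noteq> z i" "\<forall>j. j \<noteq> i \<longrightarrow> y j = z j" using \<open>e \<noteq> z i\<close> by (auto simp: y_def)
        ultimately show ?thesis by blast
      qed
      have Cl_sub: "Cl x \<subseteq> T'" if "x \<in> T'" for x using R_T that by (auto simp: Cl_def)
      have Cl_big: "2 ^ (n-1) \<le> card (Cl x)" if "x \<in> T'" for x
      proof -
        have "2 ^ card {..<n-1} \<le> card (Cl x)"
          apply (rule cube_bound)
          using that Cl_sub[OF that] finT' neighbor[OF that]
          by (auto simp: Cl_def R_def intro: finite_subset)
        then show ?thesis by simp
      qed
      define Cls where "Cls = Cl ` T'"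
      have finCls: "finite Cls" using finT' by (simp add: Cls_def)
      have disj: "pairwise disjnt Cls"
      proof (unfold pairwise_def, intro ballI impI)
        fix C1 C2 assume C: "C1 \<in> Cls" "C2 \<in> Cls" "C1 \<noteq> C2"
        then obtain x y where xy: "C1 = Cl x" "C2 = Cl y" by (auto simp: Cls_def)
        show "disjnt C1 C2"
        proof (rule ccontr)
          assume "\<not> disjnt C1 C2"
          then obtain z where "(x,z) \<in> R" "(y,z) \<in> R" by (auto simp: disjnt_def xy Cl_def)
          then have "(x,y) \<in> R" using R_sym unfolding R_def by (meson rtrancl_trans)
          then have "Cl x = Cl y" using R_sym unfolding Cl_def R_def by (meson rtrancl_trans)
          then show False using C xy by simp
        qed
      qed
      have UCls: "\<Union>Cls = T'" using Cl_sub by (auto simp: Cls_def Cl_def R_def)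
      have "card T' = sum card Cls"
        using card_Union_disjoint[OF disj] UCls finT' Cl_sub by (auto simp: Cls_def intro: finite_subset)
      also have "\<dots> \<ge> card Cls * 2 ^ (n-1)"
        using sum_bounded_below[of Cls "2^(n-1)" card] Cl_big by (auto simp: Cls_def)
      finally have cnt: "card Cls * 2 ^ (n-1) \<le> k ^ (n-1)" using cardT' by simp
      define \<Phi> where "\<Phi> f = {C \<in> Cls. \<forall>x\<in>C. f (x(n-1 := a)) = A x}" for f
      have inj: "inj_on \<Phi> E"
      proof (rule inj_onI)
        fix f f' assume ff: "f \<in> E" "f' \<in> E" "\<Phi> f = \<Phi> f'"
        have key: "\<forall>y\<in>Cl x. h (y(n-1 := a)) = A y" if "h \<in> E" "x \<in> T'" "h (x(n-1 := a)) = A x" for h x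
        proof
          fix y assume "y \<in> Cl x"
          then have "(x,y) \<in> R" by (simp add: Cl_def)
          then show "h (y(n-1 := a)) = A y" by (rule propR[OF that(1) _ that(3)])
        qed
        have xin: "x \<in> Cl x" for x by (simp add: Cl_def R_def)
        show "f = f'"
        proof (rule determined[OF ff(1,2)], intro ballI)
          fix x assume x: "x \<in> T'"
          have ClC: "Cl x \<in> Cls" using x by (simp add: Cls_def)
          have iff: "f (x(n-1 := a)) = A x \<longleftrightarrow> f' (x(n-1 := a)) = A x"
          proof
            assume "f (x(n-1 := a)) = A x"
            then have "Cl x \<in> \<Phi> f" using key[OF ff(1) x] ClC by (simp add: \<Phi>_def)
            then have "Cl x \<in> \<Phi> f'" using ff(3) by simp
            then show "f' (x(n-1 := a)) = A x" using xin by (simp add: \<Phi>_def)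
          next
            assume "f' (x(n-1 := a)) = A x"
            then have "Cl x \<in> \<Phi> f'" using key[OF ff(2) x] ClC by (simp add: \<Phi>_def)
            then have "Cl x \<in> \<Phi> f" using ff(3) by simp
            then show "f (x(n-1 := a)) = A x" using xin by (simp add: \<Phi>_def)
          qed
          show "f (x(n-1 := a)) = f' (x(n-1 := a))"
            using iff PPa[OF ff(1) f0 x] PPa[OF ff(2) f0 x] by (auto simp: A_def)
        qed
      qed
      have "card E \<le> card (Pow Cls)"
        by (rule card_inj_on_le[OF inj]) (auto simp: \<Phi>_def finCls)
      then have cE: "real (card E) \<le> 2 ^ card Cls" by (simp add: card_Pow finCls)
      also have "\<dots> = 2 powr (real (card Cls))" by (simp add: powr_realpow)
      also have "\<dots> \<le> 2 powr ((real k / 2) ^ (n - 1))"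
      proof (rule powr_mono)
        have "real (card Cls) * 2 ^ (n-1) \<le> real k ^ (n-1)"
        proof -
          have "real (card Cls * 2 ^ (n-1)) \<le> real (k ^ (n-1))" using cnt by (simp only: of_nat_le_iff)
          then show ?thesis by simp
        qed
        then show "real (card Cls) \<le> (real k / 2) ^ (n - 1)"
          by (simp add: power_divide field_simps)
      qed simp
      finally show ?thesis unfolding E_def Om_def .
    qed
  qed
qed

end
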